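(* Consider a discrete-time quasi-birth-and-death process (QBD) as described in the context, assumed irreducible and positive recurrent. For $z>0$ let $A(z)=\frac1z A_{-1}+A_0+zA_1$, let $\sigma(z)$ be the Perron–Frobenius eigenvalue of $A(z)$ and $\boldsymbol{u}(z)$ a corresponding strictly positive right eigenvector. Let $z_0$ be the minimal solution of $\sigma'(z)=0$ with $z>1$. Define the vector $\boldsymbol{v}$ on the state space by its level-$i$ subvectors $\boldsymbol{v}_i=z_0^i\,\boldsymbol{u}(z_0)$, $i\ge0$, and let $\lambda_0=\sigma(z_0)$, $C=\ell(0)$ and $$b=\max_{1\le j\le m}\big(B\boldsymbol{v}_0+A_1\boldsymbol{v}_1-\lambda_0\boldsymbol{v}_0\big)_j.$$ Then the drift condition $\mathbf{D}(\boldsymbol{v},\lambda_0,b,C)$ holds.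
   Context: A QBD is a Markov chain $\{X_t\}$ on $\mathbb{E}=\bigcup_{n\ge0}\ell(n)$, $\ell(n)=\{(n,j):1\le j\le m\}$, $m<\infty$, with transition matrix in block form (blocks indexed by levels) whose nonzero blocks are $P_{00}=B$, $P_{01}=A_1$, and for $n\ge1$: $P_{n,n-1}=A_{-1}$, $P_{nn}=A_0$, $P_{n,n+1}=A_1$, where $A_{-1},A_0,A_1,B$ are nonnegative $m\times m$ matrices. Standing assumptions: the chain is irreducible and $A=A_{-1}+A_0+A_1$ is irreducible. Positive recurrence is equivalent to $\boldsymbol{\mu}(A_{-1}-A_1)\boldsymbol{1}>0$, where $\boldsymbol{\mu}$ is the stationary probability vector of $A$. Drift condition $\mathbf{D}(\boldsymbol{v},\lambda,b,C)$: $\boldsymbol{v}$ is a finite vector on $\mathbb{E}$ bounded away from zero, $\lambda\in(0,1)$, $b<\infty$, $C\subset\mathbb{E}$ finite, and $P\boldsymbol{v}\le\lambda\boldsymbol{v}+b\,\mathbb{1}[C]$ componentwise, where $\mathbb{1}[C]$ is the indicator vector of $C$. *)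

theory Defs
  imports "HOL-Analysis.Analysis"
begin

text \<open>States of the QBD: pairs (level n, phase j), phases indexed by a finite type 'm.\<close>

definition qbd_P ::
  "real^'m^'m \<Rightarrow> real^'m^'m \<Rightarrow> real^'m^'m \<Rightarrow> real^'m^'m
     \<Rightarrow> (nat \<times> 'm) \<Rightarrow> (nat \<times> 'm) \<Rightarrow> real" where
  "qbd_P B Am1 A0 A1 x y =
     (case x of (n, i) \<Rightarrow> case y of (n', j) \<Rightarrow>
        if n = 0 then (if n' = 0 then B$i$j else if n' = 1 then A1$i$j else 0)
        else if n' + 1 = n then Am1$i$j
        else if n' = n then A0$i$j
        else if n' = n + 1 then A1$i$j
        else 0)"

definition nonneg_mat :: "real^'m^'m \<Rightarrow> bool" where
  "nonneg_mat M \<longleftrightarrow> (\<forall>i j. 0 \<le> M$i$j)"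

text \<open>Irreducibility of a nonnegative matrix: every phase reaches every phase
  in the directed graph of positive entries.\<close>
definition irreducible_mat :: "real^'m^'m \<Rightarrow> bool" where
  "irreducible_mat M \<longleftrightarrow> (\<forall>i j. (i, j) \<in> {(k, l). 0 < M$k$l}\<^sup>*)"

text \<open>Irreducibility of a Markov chain with transition kernel P.\<close>
definition irreducible_chain :: "('s \<Rightarrow> 's \<Rightarrow> real) \<Rightarrow> bool" where
  "irreducible_chain P \<longleftrightarrow> (\<forall>x y. (x, y) \<in> {(a, b). 0 < P a b}\<^sup>*)"

text \<open>Spectral radius (= Perron--Frobenius eigenvalue for irreducible nonnegative
  matrices): the largest modulus of a complex eigenvalue.\<close>
definition spectral_radius :: "real^'m^'m \<Rightarrow> real" where
  "spectral_radius M =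
     Max {cmod c | c. det (mat c - (\<chi> i j. complex_of_real (M$i$j))) = 0}"

definition qbd_Az :: "real^'m^'m \<Rightarrow> real^'m^'m \<Rightarrow> real^'m^'m \<Rightarrow> real \<Rightarrow> real^'m^'m" where
  "qbd_Az Am1 A0 A1 z = (1 / z) *\<^sub>R Am1 + A0 + z *\<^sub>R A1"

text \<open>Drift condition D(v, lambda, b, C).\<close>
definition drift_cond ::
  "('s \<Rightarrow> 's \<Rightarrow> real) \<Rightarrow> ('s \<Rightarrow> real) \<Rightarrow> real \<Rightarrow> real \<Rightarrow> 's set \<Rightarrow> bool" where
  "drift_cond P v lam b C \<longleftrightarrow>
     (\<exists>\<epsilon>>0. \<forall>x. \<epsilon> \<le> v x) \<and> 0 < lam \<and> lam < 1 \<and> finite C \<and>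
     (\<forall>x. (\<lambda>y. P x y * v y) summable_on UNIV \<and>
          (\<Sum>\<^sub>\<infinity>y. P x y * v y) \<le> lam * v x + b * indicator C x)"

end

theory Submission
  imports Defs "HOL-Computational_Algebra.Fundamental_Theorem_Algebra"
begin

(* ---- CP ---- *)
definition cpoly :: "complex^'n^'n \<Rightarrow> complex poly" where
  "cpoly N = det (\<chi> i j. if i = j then [:- (N$i$j), 1:] else [:- (N$i$j):])"

lemma cpoly_eval: "poly (cpoly N) c = det (mat c - N)"
proof -
  have e: "poly (if i = j then [:- (N$i$j), 1:] else [:- (N$i$j):]) c = (mat c - N)$i$j" for i j
    by (simp add: mat_def)
  show ?thesis
    unfolding cpoly_def det_def
    by (simp add: poly_sum poly_prod of_int_poly e del: vector_minus_component)
qed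

lemma cpoly_coeff: "coeff (cpoly N) CARD('n) = 1" for N :: "complex^'n^'n"
proof -
  let ?e = "\<lambda>i j. if i = j then [:- (N$i$j), 1:] else [:- (N$i$j):]"
  let ?t = "\<lambda>p. of_int (sign p) * (\<Prod>i\<in>UNIV. ?e i (p i))"
  have P: "finite {p. p permutes (UNIV::'n set)}" by (simp add: finite_permutations)
  have idin: "id \<in> {p. p permutes (UNIV::'n set)}" by (simp add: permutes_id)
  have dle: "degree (?e i j) \<le> 1" for i j by auto
  have other: "coeff (?t p) CARD('n) = 0" if p: "p permutes UNIV" "p \<noteq> id" for p
  proof -
    obtain i0 where i0: "p i0 \<noteq> i0" using p(2) by (metis eq_id_iff)
    have "degree (\<Prod>i\<in>UNIV. ?e i (p i)) \<le> (\<Sum>i\<in>UNIV. degree (?e i (p i)))"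
      using degree_prod_sum_le[of UNIV "\<lambda>i. ?e i (p i)"] by (simp add: o_def)
    also have "\<dots> = degree (?e i0 (p i0)) + (\<Sum>i\<in>UNIV - {i0}. degree (?e i (p i)))"
      by (simp add: sum.remove)
    also have "\<dots> \<le> 0 + (\<Sum>i\<in>UNIV - {i0}. 1)"
      using i0 by (intro add_mono sum_mono) (auto simp: dle)
    also have "\<dots> = CARD('n) - 1" by (simp add: card_Diff_singleton)
    finally have d: "degree (\<Prod>i\<in>UNIV. ?e i (p i)) < CARD('n)"
      using zero_less_card_finite[where 'a='n] by linarith
    have "coeff (?t p) CARD('n) = of_int (sign p) * coeff (\<Prod>i\<in>UNIV. ?e i (p i)) CARD('n)"
      by (simp add: of_int_poly)
    then show ?thesis using d by (simp add: coeff_eq_0)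
  qed
  have idt: "coeff (?t id) CARD('n) = 1"
  proof -
    have "?t id = (\<Prod>i\<in>UNIV. [:- (N$i$i), 1:])" by (simp add: sign_id)
    moreover have "degree (\<Prod>i\<in>(UNIV::'n set). [:- (N$i$i), 1:]) = CARD('n)"
      by (subst degree_prod_eq_sum_degree) auto
    moreover have "lead_coeff (\<Prod>i\<in>(UNIV::'n set). [:- (N$i$i), 1:]) = 1"
      by (simp add: lead_coeff_prod)
    ultimately show ?thesis by simp
  qed
  have "coeff (cpoly N) CARD('n) = (\<Sum>p\<in>{p. p permutes UNIV}. coeff (?t p) CARD('n))"
    unfolding cpoly_def det_def by (simp add: coeff_sum)
  also have "\<dots> = coeff (?t id) CARD('n) + (\<Sum>p\<in>{p. p permutes UNIV} - {id}. coeff (?t p) CARD('n))"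
    by (rule sum.remove[OF P idin])
  also have "\<dots> = 1" using idt other by simp
  finally show ?thesis .
qed

lemma eig_set_fin_ne:
  fixes N :: "complex^'n^'n"
  shows "finite {c. det (mat c - N) = 0}" "{c. det (mat c - N) = 0} \<noteq> {}"
proof -
  have nz: "cpoly N \<noteq> 0" using cpoly_coeff[of N] by auto
  have "degree (cpoly N) \<ge> CARD('n)" using cpoly_coeff[of N] by (simp add: le_degree)
  then have "degree (cpoly N) \<noteq> 0" using zero_less_card_finite[where 'a='n] by linarith
  then have "\<not> constant (poly (cpoly N))" by (simp add: constant_degree)
  from fundamental_theorem_of_algebra[OF this] show "{c. det (mat c - N) = 0} \<noteq> {}"
    by (auto simp: cpoly_eval)
  show "finite {c. det (mat c - N) = 0}" using poly_roots_finite[OF nz] by (simp add: cpoly_eval)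
qed

(* ---- EV ---- *)
lemma eigvec_exists:
  fixes N :: "complex^'n^'n"
  assumes "det (mat c - N) = 0"
  shows "\<exists>y. y \<noteq> 0 \<and> N *v y = c *s y"
proof -
  have "\<not> inj ((*v) (mat c - N))"
    using det_nz_iff_inj_gen[of "(*v) (mat c - N)"] assms by simp
  then obtain a b where ab: "a \<noteq> b" "(mat c - N) *v a = (mat c - N) *v b"
    unfolding inj_def by blast
  have "(mat c - N) *v (a - b) = 0" using ab(2) by (simp add: matrix_vector_mult_diff_distrib)
  moreover have "mat c *v v = c *s v" for v :: "complex^'n"
    by (simp add: vec_eq_iff matrix_vector_mult_def mat_def mult_delta_left)
  ultimately have "N *v (a - b) = c *s (a - b)"
    by (simp add: matrix_vector_mult_diff_rdistrib)
  then show ?thesis using ab(1) by (intro exI[of _ "a - b"]) auto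
qed

definition cmat :: "real^'n^'n \<Rightarrow> complex^'n^'n" where
  "cmat M = (\<chi> i j. complex_of_real (M$i$j))"

lemma iter_mono:
  fixes M :: "real^'n^'n"
  assumes "nonneg_mat M" "\<forall>j. v$j \<le> w$j"
  shows "\<forall>j. (((*v) M ^^ n) v)$j \<le> (((*v) M ^^ n) w)$j"
proof (induction n)
  case 0 then show ?case using assms(2) by simp
next
  case (Suc n)
  show ?case using Suc assms(1)
    by (auto simp: matrix_vector_mult_def nonneg_mat_def intro!: sum_mono mult_left_mono)
qed

lemma iter_scale:
  fixes M :: "real^'n^'n"
  shows "((*v) M ^^ n) (t *\<^sub>R x) = t *\<^sub>R ((*v) M ^^ n) x"
  by (induction n) (auto simp: matrix_vector_mult_def vec_eq_iff sum_distrib_left algebra_simps)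

lemma cw_power:
  fixes M :: "real^'n^'n"
  assumes nn: "nonneg_mat M" and xpos: "\<forall>j. 0 < x$j"
    and bound: "\<forall>j. (((*v) M ^^ K) x)$j \<le> \<gamma> * x$j"
    and eig: "det (mat c - cmat M) = 0"
  shows "cmod c ^ K \<le> \<gamma>"
proof -
  obtain y where y: "y \<noteq> 0" "cmat M *v y = c *s y" using eigvec_exists[OF eig] by blast
  define a where "a = (\<chi> j. cmod (y$j))"
  have step: "cmod c ^ n * a$j \<le> (((*v) M ^^ n) a)$j" for n j
  proof (induction n arbitrary: j)
    case 0 then show ?case by simp
  next
    case (Suc n)
    have "cmod c * a$j = cmod ((cmat M *v y)$j)" using y(2) by (simp add: a_def norm_mult)
    also have "\<dots> \<le> (\<Sum>k\<in>UNIV. M$j$k * a$k)"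
      unfolding matrix_vector_mult_def cmat_def a_def using nn
      by (auto simp: nonneg_mat_def norm_mult intro!: order.trans[OF norm_sum] sum_mono)
    finally have 1: "cmod c * a$j \<le> (\<Sum>k\<in>UNIV. M$j$k * a$k)" .
    have "cmod c ^ Suc n * a$j = cmod c ^ n * (cmod c * a$j)" by simp
    also have "\<dots> \<le> cmod c ^ n * (\<Sum>k\<in>UNIV. M$j$k * a$k)"
      using 1 by (intro mult_left_mono) auto
    also have "\<dots> = (\<Sum>k\<in>UNIV. M$j$k * (cmod c ^ n * a$k))"
      by (simp add: sum_distrib_left algebra_simps)
    also have "\<dots> \<le> (\<Sum>k\<in>UNIV. M$j$k * (((*v) M ^^ n) a)$k)"
      using Suc nn by (auto simp: nonneg_mat_def intro!: sum_mono mult_left_mono)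
    also have "\<dots> = (((*v) M ^^ Suc n) a)$j" by (simp add: matrix_vector_mult_def)
    finally show ?case .
  qed
  define t where "t = Max (range (\<lambda>j. a$j / x$j))"
  have "t \<in> range (\<lambda>j. a$j / x$j)" unfolding t_def by (rule Max_in) auto
  then obtain j0 where j0: "t = a$j0 / x$j0" by auto
  have ale: "a$j \<le> t * x$j" for j
  proof -
    have "a$j / x$j \<le> t" unfolding t_def by (rule Max_ge) auto
    then show ?thesis using xpos by (simp add: divide_le_eq)
  qed
  obtain k where k: "y$k \<noteq> 0" using y(1) by (metis vec_eq_iff zero_index)
  have "0 < a$k / x$k" using k xpos by (simp add: a_def)
  also have "\<dots> \<le> t" unfolding t_def by (rule Max_ge) auto
  finally have tpos: "0 < t" .
  have aj0: "a$j0 = t * x$j0" using j0 xpos[rule_format, of j0] by (simp add: field_simps)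
  have "cmod c ^ K * (t * x$j0) \<le> (((*v) M ^^ K) a)$j0" using step[of K j0] aj0 by simp
  also have "\<dots> \<le> (((*v) M ^^ K) (t *\<^sub>R x))$j0"
    using iter_mono[OF nn, of a "t *\<^sub>R x"] ale by simp
  also have "\<dots> = t * (((*v) M ^^ K) x)$j0" by (simp add: iter_scale)
  also have "\<dots> \<le> t * (\<gamma> * x$j0)" using bound tpos by (simp add: mult_left_mono)
  finally have "cmod c ^ K * (t * x$j0) \<le> \<gamma> * (t * x$j0)" by (simp add: algebra_simps)
  moreover have "0 < t * x$j0" using tpos xpos by simp
  ultimately show ?thesis by (meson mult_le_cancel_right_pos)
qed

(* ---- Lem ---- *)
definition dd :: "real \<Rightarrow> real" where "dd t = (1 + t) / 2 - sqrt t"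

lemma dd_nonneg: "0 \<le> t \<Longrightarrow> 0 \<le> dd t"
proof -
  assume t: "0 \<le> t"
  have "dd t = (sqrt t - 1)^2 / 2" using t by (simp add: dd_def power2_eq_square algebra_simps)
  moreover have "0 \<le> (sqrt t - 1)^2 / 2" by simp
  ultimately show ?thesis by linarith
qed

lemma dd_zero: "0 \<le> t \<Longrightarrow> dd t = 0 \<Longrightarrow> t = 1"
proof -
  assume t: "0 \<le> t" and d: "dd t = 0"
  have "dd t = (sqrt t - 1)^2 / 2" using t by (simp add: dd_def power2_eq_square algebra_simps)
  then have "sqrt t = 1" using d by simp
  then show ?thesis using t by simp
qed

lemma pw_bound:
  fixes t a :: real
  assumes t: "0 < t" and a: "1/2 \<le> a" "a \<le> 1"
  shows "t powr a \<le> (1 - a) * (1 + t) + (2*a - 1) * t - 2 * (1 - a) * dd t"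
proof -
  have c: "exp ((1 - (2*a-1)) *\<^sub>R (ln t / 2) + (2*a-1) *\<^sub>R ln t)
        \<le> (1 - (2*a-1)) * exp (ln t / 2) + (2*a-1) * exp (ln t)"
    using convex_onD[OF exp_convex, of "2*a-1" "ln t / 2" "ln t"] a by simp
  have e1: "(1 - (2*a-1)) *\<^sub>R (ln t / 2) + (2*a-1) *\<^sub>R ln t = a * ln t"
    by (simp add: algebra_simps)
  have e2: "exp (ln t / 2) = sqrt t" using t
    by (simp add: powr_half_sqrt[symmetric] powr_def)
  have e3: "exp (a * ln t) = t powr a" using t by (simp add: powr_def)
  have "t powr a \<le> (2 - 2*a) * sqrt t + (2*a-1) * t"
    using c unfolding e1 e2 e3 using t by simp
  also have "\<dots> = (1 - a) * (1 + t) + (2*a - 1) * t - 2 * (1 - a) * dd t"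
    unfolding dd_def by (simp add: field_simps)
  finally show ?thesis .
qed

lemma root_step:
  fixes lam s eps :: real
  assumes lam: "1 \<le> lam" and N: "0 < N" and s: "0 \<le> s" and eps: "0 \<le> eps"
    and b: "s ^ N \<le> lam ^ N - eps"
  shows "s \<le> lam - eps / (real N * lam ^ (N - 1))"
proof -
  obtain M where M: "N = Suc M" using N not0_implies_Suc by blast
  define eta where "eta = eps / (real N * lam ^ M)"
  have lpos: "0 < lam" using lam by simp
  have lM: "0 < lam ^ M" using lpos by simp
  have pN: "lam ^ N = lam * lam ^ M" using M by simp
  have "0 \<le> s ^ N" using s by simp
  then have epsle: "eps \<le> lam * lam ^ M" using b pN by linarith
  have etale: "eta \<le> lam"
  proof -
    have "eta \<le> (lam * lam ^ M) / (real N * lam ^ M)"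
      unfolding eta_def using epsle lM N by (intro divide_right_mono) auto
    also have "\<dots> = lam / real N" using lM by simp
    also have "\<dots> \<le> lam" using N lpos by (simp add: divide_le_eq)
    finally show ?thesis .
  qed
  have "-1 \<le> - eta / lam" using etale lpos by simp
  from Bernoulli_inequality[OF this, of N]
  have B: "1 + real N * (- eta / lam) \<le> (1 + - eta / lam) ^ N" .
  have "real N * eta = eps / lam ^ M" unfolding eta_def using N by simp
  then have "lam ^ N * (real N * (eta / lam)) = eps"
    using pN lpos lM by (simp add: field_simps)
  then have "lam ^ N - eps = lam ^ N * (1 + real N * (- eta / lam))"
    by (simp add: algebra_simps)
  also have "\<dots> \<le> lam ^ N * (1 + - eta / lam) ^ N"
    using B lpos by (intro mult_left_mono) auto
  also have "\<dots> = (lam * (1 + - eta / lam)) ^ N"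
    by (simp only: power_mult_distrib)
  also have "lam * (1 + - eta / lam) = lam - eta"
    using lpos by (simp add: field_simps)
  finally have "s ^ N \<le> (lam - eta) ^ N" using b by simp
  then have "s \<le> lam - eta"
    using power_le_imp_le_base[of s M "lam - eta"] etale M by simp
  then show ?thesis by (simp add: eta_def M)
qed

lemma convert:
  fixes z z0 :: real
  assumes z0: "1 < z0" and z: "sqrt z0 \<le> z" "z < z0"
  defines "a \<equiv> ln z / ln z0"
  shows "1/2 \<le> a" "a < 1" "z0 powr a = z" "(z0 - z) / (z0 * ln z0) \<le> 1 - a"
proof -
  have L: "0 < ln z0" using z0 by simp
  have zpos: "0 < z" using z z0 by (smt (verit) real_sqrt_gt_zero)
  have "ln (sqrt z0) \<le> ln z" using z zpos z0 by simp
  moreover have "ln (sqrt z0) = ln z0 / 2" using z0 by (simp add: ln_sqrt)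
  ultimately show "1/2 \<le> a" unfolding a_def using L by (simp add: field_simps)
  have "ln z < ln z0" using z zpos by simp
  then show "a < 1" unfolding a_def using L by simp
  show "z0 powr a = z" unfolding a_def using L z0 zpos by (simp add: powr_def)
  have "1 - z / z0 \<le> - ln (z / z0)"
    using ln_le_minus_one[of "z / z0"] zpos z0 by simp
  also have "\<dots> = ln z0 - ln z" using zpos z0 by (simp add: ln_div)
  finally have "(z0 - z) / z0 \<le> ln z0 - ln z" using z0 by (simp add: field_simps)
  then have "((z0 - z) / z0) / ln z0 \<le> (ln z0 - ln z) / ln z0"
    using L by (intro divide_right_mono) auto
  also have "(ln z0 - ln z) / ln z0 = 1 - a" unfolding a_def using L by (simp add: field_simps)
  finally show "(z0 - z) / (z0 * ln z0) \<le> 1 - a" by simp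
qed

lemma powr_ge_min:
  fixes r a :: real
  assumes "0 < r" "0 \<le> a" "a \<le> 1"
  shows "min 1 r \<le> r powr a"
proof (cases "1 \<le> r")
  case True then show ?thesis using assms ge_one_powr_ge_zero by simp
next
  case False
  then have "r powr 1 \<le> r powr a" using assms by (intro powr_mono') auto
  then show ?thesis using False assms by simp
qed

(* ---- Prop ---- *)
lemma mv_mono1:
  fixes M :: "real^'n^'n"
  assumes "nonneg_mat M" "\<forall>l. y$l \<le> w$l"
  shows "(M *v y)$j \<le> (M *v w)$j"
  using assms by (auto simp: matrix_vector_mult_def nonneg_mat_def intro!: sum_mono mult_left_mono)

lemma propagation:
  fixes M :: "real \<Rightarrow> real^'n^'n" and x :: "real \<Rightarrow> real^'n"
    and E :: "'n \<Rightarrow> real" and R :: "('n \<times> 'n) set"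
  assumes lam: "1 \<le> lam"
    and Ile: "\<forall>a\<in>I. a \<le> 1"
    and nn: "\<forall>a\<in>I. nonneg_mat (M a)"
    and xpos: "\<forall>a\<in>I. \<forall>j. 0 < x a $ j"
    and Enn: "\<forall>j. 0 \<le> E j"
    and base: "\<forall>a\<in>I. \<forall>j. (M a *v x a)$j \<le> (lam - (1 - a) * E j) * x a $ j"
    and edge: "\<forall>(j,k)\<in>R. \<exists>\<delta>>0. \<forall>a\<in>I. \<delta> * x a $ j \<le> M a $ j $ k * x a $ k"
    and irr: "\<forall>j g. (j, g) \<in> R\<^sup>*"
    and G: "\<exists>g. 0 < E g"
  shows "\<exists>N \<kappa>. 0 < N \<and> 0 < \<kappa> \<and>
     (\<forall>a\<in>I. \<forall>j. (((*v) (M a) ^^ N) (x a))$j \<le> (lam ^ N - (1 - a) * \<kappa>) * x a $ j)"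
proof -
  define Q where "Q n \<kappa> j \<longleftrightarrow> (\<forall>a\<in>I. (((*v) (M a) ^^ n) (x a))$j \<le> (lam ^ n - (1 - a) * \<kappa>) * x a $ j)"
    for n \<kappa> j
  have one: "(M a *v x a)$j \<le> lam * x a $ j" if a: "a \<in> I" for a j
  proof -
    have "(M a *v x a)$j \<le> (lam - (1 - a) * E j) * x a $ j" using base a by blast
    also have "\<dots> \<le> lam * x a $ j"
      using Ile a Enn xpos by (intro mult_right_mono) (auto intro!: mult_nonneg_nonneg less_imp_le)
    finally show ?thesis .
  qed
  have up: "(((*v) (M a) ^^ n) (x a))$j \<le> lam ^ n * x a $ j" if a: "a \<in> I" for a n j
  proof (induction n arbitrary: j)
    case 0 then show ?case by simp
  next
    case (Suc n)
    have "(((*v) (M a) ^^ Suc n) (x a))$j = (M a *v (((*v) (M a) ^^ n) (x a)))$j" by simp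
    also have "\<dots> \<le> (M a *v (lam ^ n *\<^sub>R x a))$j"
      using Suc nn a by (intro mv_mono1) auto
    also have "\<dots> = lam ^ n * (M a *v x a)$j"
      by (simp add: matrix_vector_mult_def sum_distrib_left algebra_simps)
    also have "\<dots> \<le> lam ^ n * (lam * x a $ j)"
      using one[OF a] lam by (intro mult_left_mono) auto
    finally show ?case by (simp add: algebra_simps)
  qed
  have lift1: "Q (Suc n) \<kappa> j" if q: "Q n \<kappa> j" and k: "0 \<le> \<kappa>" for n \<kappa> j
    unfolding Q_def
  proof
    fix a assume a: "a \<in> I"
    have "(((*v) (M a) ^^ Suc n) (x a))$j = (((*v) (M a) ^^ n) (M a *v x a))$j"
      by (simp add: funpow_Suc_right del: funpow.simps)
    also have "\<dots> \<le> (((*v) (M a) ^^ n) (lam *\<^sub>R x a))$j"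
      using iter_mono[of "M a" "M a *v x a" "lam *\<^sub>R x a" n] nn a one[OF a] by auto
    also have "\<dots> = lam * (((*v) (M a) ^^ n) (x a))$j" by (simp add: iter_scale)
    also have "\<dots> \<le> lam * ((lam ^ n - (1 - a) * \<kappa>) * x a $ j)"
      using q a lam unfolding Q_def by (intro mult_left_mono) auto
    also have "\<dots> \<le> (lam ^ Suc n - (1 - a) * \<kappa>) * x a $ j"
    proof -
      have "0 \<le> 1 - a" "0 \<le> x a $ j" using Ile a xpos by (auto simp: less_imp_le)
      then have "0 \<le> (1 - a) * \<kappa> * x a $ j" using k by simp
      then have "(1 - a) * \<kappa> * x a $ j \<le> lam * ((1 - a) * \<kappa> * x a $ j)"
        using lam by (simp add: mult_le_cancel_right1)
      then show ?thesis by (simp add: algebra_simps)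
    qed
    finally show "(((*v) (M a) ^^ Suc n) (x a))$j \<le> (lam ^ Suc n - (1 - a) * \<kappa>) * x a $ j" .
  qed
  have lift: "Q (n + m) \<kappa> j" if q: "Q n \<kappa> j" and k: "0 \<le> \<kappa>" for n m \<kappa> j
    by (induction m) (auto simp: q intro: lift1 k)
  obtain g where g: "0 < E g" using G by blast
  have ex: "\<exists>n \<kappa>. 0 < n \<and> 0 < \<kappa> \<and> Q n \<kappa> j" for j
  proof -
    have "(j, g) \<in> R\<^sup>*" using irr by blast
    then show ?thesis
    proof (induction rule: converse_rtrancl_induct)
      case base
      have "Q 1 (E g) g" unfolding Q_def using assms(6) by simp
      then show ?case using g by blast
    next
      case (step j k)
      then obtain n \<kappa> where nk: "0 < n" "0 < \<kappa>" "Q n \<kappa> k" by blast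
      obtain \<delta> where d: "0 < \<delta>" "\<forall>a\<in>I. \<delta> * x a $ j \<le> M a $ j $ k * x a $ k"
        using edge step(1) by blast
      have "Q (Suc n) (\<kappa> * \<delta>) j" unfolding Q_def
      proof
        fix a assume a: "a \<in> I"
        let ?y = "((*v) (M a) ^^ n) (x a)"
        let ?w = "\<chi> l. lam ^ n * x a $ l - (if l = k then (1 - a) * \<kappa> * x a $ k else 0)"
        have yw: "\<forall>l. ?y $ l \<le> ?w $ l"
        proof
          fix l
          show "?y $ l \<le> ?w $ l"
          proof (cases "l = k")
            case True
            have "?y $ k \<le> (lam ^ n - (1 - a) * \<kappa>) * x a $ k" using nk(3) a unfolding Q_def by blast
            then show ?thesis using True by (simp add: algebra_simps)
          next
            case False
            then show ?thesis using up[OF a] by simp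
          qed
        qed
        have "(((*v) (M a) ^^ Suc n) (x a))$j = (M a *v ?y)$j" by simp
        also have "\<dots> \<le> (M a *v ?w)$j" using nn a yw by (intro mv_mono1) auto
        also have "\<dots> = lam ^ n * (M a *v x a)$j - M a $ j $ k * ((1 - a) * \<kappa> * x a $ k)"
          by (simp add: matrix_vector_mult_def sum_distrib_left right_diff_distrib sum_subtractf
              mult_delta_right algebra_simps)
        also have "\<dots> \<le> lam ^ n * (lam * x a $ j) - (1 - a) * \<kappa> * (\<delta> * x a $ j)"
        proof -
          have "lam ^ n * (M a *v x a)$j \<le> lam ^ n * (lam * x a $ j)"
            using one[OF a] lam by (intro mult_left_mono) auto
          moreover have "(1 - a) * \<kappa> * (\<delta> * x a $ j) \<le> (1 - a) * \<kappa> * (M a $ j $ k * x a $ k)"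
            using d a Ile nk by (intro mult_left_mono) auto
          ultimately show ?thesis by (simp add: algebra_simps)
        qed
        also have "\<dots> = (lam ^ Suc n - (1 - a) * (\<kappa> * \<delta>)) * x a $ j" by (simp add: algebra_simps)
        finally show "(((*v) (M a) ^^ Suc n) (x a))$j \<le> (lam ^ Suc n - (1 - a) * (\<kappa> * \<delta>)) * x a $ j" .
      qed
      then show ?case using nk d by (intro exI[of _ "Suc n"] exI[of _ "\<kappa> * \<delta>"]) auto
    qed
  qed
  then obtain nf kf where nkf: "\<forall>j. 0 < nf j \<and> 0 < kf j \<and> Q (nf j) (kf j) j" by metis
  define N where "N = Max (range nf)"
  define \<kappa> where "\<kappa> = Min (range kf)"
  have Npos: "0 < N"
  proof -
    fix j0 :: 'n
    have "nf j0 \<le> N" unfolding N_def by (rule Max_ge) auto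
    then show ?thesis using nkf by (meson less_le_trans)
  qed
  have kpos: "0 < \<kappa>"
  proof -
    have "\<kappa> \<in> range kf" unfolding \<kappa>_def by (rule Min_in) auto
    then show ?thesis using nkf by auto
  qed
  have "Q N \<kappa> j" for j
  proof -
    have "nf j \<le> N" unfolding N_def by (rule Max_ge) auto
    then have "Q N (kf j) j" using lift[of "nf j" "kf j" j "N - nf j"] nkf by (simp add: less_imp_le)
    moreover have "\<kappa> \<le> kf j" unfolding \<kappa>_def by (rule Min_le) auto
    ultimately show ?thesis unfolding Q_def
    proof (intro ballI)
      fix a assume q: "\<forall>a\<in>I. (((*v) (M a) ^^ N) (x a))$j \<le> (lam ^ N - (1 - a) * kf j) * x a $ j"
        and kk: "\<kappa> \<le> kf j" and a: "a \<in> I"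
      have "(lam ^ N - (1 - a) * kf j) * x a $ j \<le> (lam ^ N - (1 - a) * \<kappa>) * x a $ j"
      proof -
        have "0 \<le> 1 - a" "0 \<le> x a $ j" using Ile a xpos by (auto simp: less_imp_le)
        then have "(1 - a) * \<kappa> \<le> (1 - a) * kf j" using kk by (intro mult_left_mono)
        then show ?thesis using \<open>0 \<le> x a $ j\<close> by (intro mult_right_mono) auto
      qed
      then show "(((*v) (M a) ^^ N) (x a))$j \<le> (lam ^ N - (1 - a) * \<kappa>) * x a $ j"
        using q a by (meson order_trans)
    qed
  qed
  then show ?thesis unfolding Q_def using Npos kpos by blast
qed

(* ---- Base ---- *)
lemma sr_in: "\<exists>c. det (mat c - cmat M) = 0 \<and> spectral_radius M = cmod c"
proof -
  have S: "{cmod c | c. det (mat c - (\<chi> i j. complex_of_real (M$i$j))) = 0}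
      = cmod ` {c. det (mat c - cmat M) = 0}" by (auto simp: cmat_def)
  have "spectral_radius M \<in> cmod ` {c. det (mat c - cmat M) = 0}"
    unfolding spectral_radius_def S using eig_set_fin_ne[of "cmat M"] by (intro Max_in) auto
  then show ?thesis by auto
qed

lemma sr_bound:
  fixes M :: "real^'n^'n"
  assumes "nonneg_mat M" "\<forall>j. 0 < x$j" "\<forall>j. (((*v) M ^^ K) x)$j \<le> \<gamma> * x$j"
  shows "spectral_radius M ^ K \<le> \<gamma>"
  using sr_in[of M] cw_power[OF assms] by auto

definition Dfun :: "real^'m^'m \<Rightarrow> real^'m^'m \<Rightarrow> real^'m^'m \<Rightarrow> real^'m \<Rightarrow> real \<Rightarrow> 'm \<Rightarrow> real" where
  "Dfun Am1 A0 A1 u z0 j = (\<Sum>k\<in>UNIV. Am1$j$k * dd (u$k / (z0 * u$j)) + A0$j$k * dd (u$k / u$j)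
        + A1$j$k * dd (z0 * u$k / u$j))"

lemma base_ineq:
  fixes Am1 A0 A1 :: "real^'m^'m" and u :: "real^'m"
  assumes nn: "nonneg_mat Am1" "nonneg_mat A0" "nonneg_mat A1"
    and stoch: "\<forall>i. (\<Sum>j\<in>UNIV. Am1$i$j + A0$i$j + A1$i$j) = 1"
    and z0: "1 < z0" and upos: "\<forall>j. 0 < u$j"
    and eigrow: "\<forall>j. (\<Sum>k\<in>UNIV. ((1/z0) * Am1$j$k + A0$j$k + z0 * A1$j$k) * u$k) = lam * u$j"
    and a: "1/2 \<le> a" "a \<le> 1"
  shows "(qbd_Az Am1 A0 A1 (z0 powr a) *v (\<chi> k. u$k powr a))$j
     \<le> (lam - (1 - a) * (lam - 1 + 2 * Dfun Am1 A0 A1 u z0 j)) * u$j powr a"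
proof -
  define z where "z = z0 powr a"
  define tm where "tm k = u$k / (z0 * u$j)" for k
  define t0 where "t0 k = u$k / u$j" for k
  define tp where "tp k = z0 * u$k / u$j" for k
  define l where "l t = (1 - a) * (1 + t) + (2*a - 1) * t - 2 * (1 - a) * dd t" for t
  have zpos: "0 < z" unfolding z_def using z0 by simp
  have uj: "0 < u$j" using upos by simp
  have ujp: "0 < u$j powr a" using uj by simp
  have tpos: "0 < tm k" "0 < t0 k" "0 < tp k" for k
    using upos z0 by (auto simp: tm_def t0_def tp_def)
  have trm: "((1/z) * Am1$j$k + A0$j$k + z * A1$j$k) * u$k powr a
      = u$j powr a * (Am1$j$k * tm k powr a + A0$j$k * t0 k powr a + A1$j$k * tp k powr a)" for k
  proof -
    have uk: "0 < u$k" using upos by simp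
    have e1: "tm k powr a = u$k powr a / (z0 powr a * u$j powr a)"
      unfolding tm_def using uk uj z0 by (simp add: powr_divide powr_mult)
    have e2: "t0 k powr a = u$k powr a / u$j powr a"
      unfolding t0_def using uk uj by (simp add: powr_divide)
    have e3: "tp k powr a = z0 powr a * u$k powr a / u$j powr a"
      unfolding tp_def using uk uj z0 by (simp add: powr_divide powr_mult)
    have zz: "0 < z0 powr a" using z0 by simp
    show ?thesis unfolding e1 e2 e3 z_def using ujp zz by (simp add: field_simps)
  qed
  have "(qbd_Az Am1 A0 A1 z *v (\<chi> k. u$k powr a))$j
      = (\<Sum>k\<in>UNIV. ((1/z) * Am1$j$k + A0$j$k + z * A1$j$k) * u$k powr a)"
    by (simp add: qbd_Az_def matrix_vector_mult_def)
  also have "\<dots> = u$j powr a * (\<Sum>k\<in>UNIV. Am1$j$k * tm k powr a + A0$j$k * t0 k powr a + A1$j$k * tp k powr a)"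
    by (simp only: trm sum_distrib_left)
  also have "\<dots> \<le> u$j powr a * (\<Sum>k\<in>UNIV. Am1$j$k * l (tm k) + A0$j$k * l (t0 k) + A1$j$k * l (tp k))"
  proof -
    have "Am1$j$k * tm k powr a + A0$j$k * t0 k powr a + A1$j$k * tp k powr a
        \<le> Am1$j$k * l (tm k) + A0$j$k * l (t0 k) + A1$j$k * l (tp k)" for k
      using nn tpos[of k] pw_bound[OF _ a] unfolding nonneg_mat_def l_def
      by (intro add_mono mult_left_mono) auto
    then show ?thesis using ujp by (intro mult_left_mono sum_mono) auto
  qed
  also have "(\<Sum>k\<in>UNIV. Am1$j$k * l (tm k) + A0$j$k * l (t0 k) + A1$j$k * l (tp k))
      = (1 - a) * (\<Sum>k\<in>UNIV. Am1$j$k + A0$j$k + A1$j$k)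
        + a * (\<Sum>k\<in>UNIV. Am1$j$k * tm k + A0$j$k * t0 k + A1$j$k * tp k)
        - 2 * (1 - a) * Dfun Am1 A0 A1 u z0 j"
  proof -
    have "Am1$j$k * l (tm k) + A0$j$k * l (t0 k) + A1$j$k * l (tp k)
       = (1 - a) * (Am1$j$k + A0$j$k + A1$j$k)
        + a * (Am1$j$k * tm k + A0$j$k * t0 k + A1$j$k * tp k)
        - 2 * (1 - a) * (Am1$j$k * dd (tm k) + A0$j$k * dd (t0 k) + A1$j$k * dd (tp k))" for k
      unfolding l_def by (simp add: algebra_simps)
    define X where "X k = Am1$j$k + A0$j$k + A1$j$k" for k
    define Y where "Y k = Am1$j$k * tm k + A0$j$k * t0 k + A1$j$k * tp k" for k
    define Z where "Z k = Am1$j$k * dd (tm k) + A0$j$k * dd (t0 k) + A1$j$k * dd (tp k)" for k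
    have pt: "Am1$j$k * l (tm k) + A0$j$k * l (t0 k) + A1$j$k * l (tp k)
       = (1 - a) * X k + a * Y k - 2 * (1 - a) * Z k" for k
      unfolding X_def Y_def Z_def by fact
    have "(\<Sum>k\<in>UNIV. Am1$j$k * l (tm k) + A0$j$k * l (t0 k) + A1$j$k * l (tp k))
       = (\<Sum>k\<in>UNIV. (1 - a) * X k + a * Y k - 2 * (1 - a) * Z k)"
      by (simp only: pt)
    also have "\<dots> = (1 - a) * (\<Sum>k\<in>UNIV. X k) + a * (\<Sum>k\<in>UNIV. Y k) - 2 * (1 - a) * (\<Sum>k\<in>UNIV. Z k)"
      by (simp add: sum_subtractf sum.distrib sum_distrib_left)
    also have "\<dots> = (1 - a) * (\<Sum>k\<in>UNIV. Am1$j$k + A0$j$k + A1$j$k)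
        + a * (\<Sum>k\<in>UNIV. Am1$j$k * tm k + A0$j$k * t0 k + A1$j$k * tp k)
        - 2 * (1 - a) * (\<Sum>k\<in>UNIV. Am1$j$k * dd (tm k) + A0$j$k * dd (t0 k) + A1$j$k * dd (tp k))"
      unfolding X_def Y_def Z_def ..
    also have "(\<Sum>k\<in>UNIV. Am1$j$k * dd (tm k) + A0$j$k * dd (t0 k) + A1$j$k * dd (tp k))
        = Dfun Am1 A0 A1 u z0 j"
      unfolding Dfun_def tm_def t0_def tp_def ..
    finally show ?thesis .
  qed
  also have "(\<Sum>k\<in>UNIV. Am1$j$k * tm k + A0$j$k * t0 k + A1$j$k * tp k) = lam"
  proof -
    have "Am1$j$k * tm k + A0$j$k * t0 k + A1$j$k * tp k
        = ((1/z0) * Am1$j$k + A0$j$k + z0 * A1$j$k) * u$k / u$j" for k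
      unfolding tm_def t0_def tp_def using uj z0 by (simp add: field_simps)
    then have "(\<Sum>k\<in>UNIV. Am1$j$k * tm k + A0$j$k * t0 k + A1$j$k * tp k)
        = (\<Sum>k\<in>UNIV. ((1/z0) * Am1$j$k + A0$j$k + z0 * A1$j$k) * u$k) / u$j"
      by (simp add: sum_divide_distrib)
    also have "\<dots> = lam" using eigrow uj by simp
    finally show ?thesis .
  qed
  also have "(\<Sum>k\<in>UNIV. Am1$j$k + A0$j$k + A1$j$k) = 1" using stoch by simp
  finally show ?thesis unfolding z_def by (simp add: algebra_simps)
qed

(* ---- Main1 ---- *)
lemma G_nonempty:
  fixes Am1 A0 A1 :: "real^'m^'m" and u mu :: "real^'m"
  assumes nn: "nonneg_mat Am1" "nonneg_mat A0" "nonneg_mat A1"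
    and stoch: "\<forall>i. (\<Sum>j\<in>UNIV. Am1$i$j + A0$i$j + A1$i$j) = 1"
    and mu: "mu v* (Am1 + A0 + A1) = mu"
    and pos_rec: "mu \<bullet> ((Am1 - A1) *v (\<chi> j. 1)) > 0"
    and z0: "1 < z0" and upos: "\<forall>j. 0 < u$j"
    and D0: "\<forall>j. Dfun Am1 A0 A1 u z0 j = 0"
  shows False
proof -
  define L where "L = ln z0"
  define w where "w = (\<chi> k. ln (u$k))"
  have Lpos: "0 < L" unfolding L_def using z0 by simp
  have zero_terms: "Am1$j$k * dd (u$k / (z0 * u$j)) = 0 \<and> A0$j$k * dd (u$k / u$j) = 0
        \<and> A1$j$k * dd (z0 * u$k / u$j) = 0" for j k
  proof -
    have nnt: "0 \<le> Am1$j$k * dd (u$k / (z0 * u$j))" "0 \<le> A0$j$k * dd (u$k / u$j)"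
        "0 \<le> A1$j$k * dd (z0 * u$k / u$j)" for j k
    proof -
      have p: "0 \<le> u$k/(z0*u$j)" "0 \<le> u$k/u$j" "0 \<le> z0*u$k/u$j"
        using upos[rule_format, of j] upos[rule_format, of k] z0 by (simp_all add: less_imp_le)
      show "0 \<le> Am1$j$k * dd (u$k / (z0 * u$j))" "0 \<le> A0$j$k * dd (u$k / u$j)"
        "0 \<le> A1$j$k * dd (z0 * u$k / u$j)"
        using nn p dd_nonneg unfolding nonneg_mat_def by (auto intro!: mult_nonneg_nonneg)
    qed
    have "(\<Sum>k\<in>UNIV. Am1$j$k * dd (u$k / (z0 * u$j)) + A0$j$k * dd (u$k / u$j)
        + A1$j$k * dd (z0 * u$k / u$j)) = 0" using D0 unfolding Dfun_def by blast
    then have "\<forall>k\<in>UNIV. Am1$j$k * dd (u$k / (z0 * u$j)) + A0$j$k * dd (u$k / u$j)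
        + A1$j$k * dd (z0 * u$k / u$j) = 0"
      using nnt by (subst (asm) sum_nonneg_eq_0_iff) (auto intro!: add_nonneg_nonneg)
    then have "Am1$j$k * dd (u$k / (z0 * u$j)) + A0$j$k * dd (u$k / u$j)
        + A1$j$k * dd (z0 * u$k / u$j) = 0" by blast
    then show ?thesis using nnt[of j k] by (intro conjI) linarith+
  qed
  have cm: "Am1$j$k * w$k = Am1$j$k * (w$j + L)" for j k
  proof (cases "Am1$j$k = 0")
    case False
    then have "dd (u$k / (z0 * u$j)) = 0" using zero_terms[of j k] False by simp
    then have "u$k / (z0 * u$j) = 1" using upos z0 by (intro dd_zero) (auto intro!: less_imp_le)
    then have "u$k = z0 * u$j" using upos z0 by (simp add: field_simps)
    then have "ln (u$k) = ln (u$j) + L" using upos[rule_format, of j] z0 unfolding L_def by (simp add: ln_mult)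
    then show ?thesis unfolding w_def by simp
  qed simp
  have c0: "A0$j$k * w$k = A0$j$k * w$j" for j k
  proof (cases "A0$j$k = 0")
    case False
    then have "dd (u$k / u$j) = 0" using zero_terms[of j k] False by simp
    then have "u$k / u$j = 1" using upos by (intro dd_zero) (auto intro!: less_imp_le)
    then have "u$k = u$j" using upos by (simp add: field_simps)
    then show ?thesis unfolding w_def by simp
  qed simp
  have cp: "A1$j$k * w$k = A1$j$k * (w$j - L)" for j k
  proof (cases "A1$j$k = 0")
    case False
    then have "dd (z0 * u$k / u$j) = 0" using zero_terms[of j k] False by simp
    then have "z0 * u$k / u$j = 1" using upos z0 by (intro dd_zero) (auto intro!: less_imp_le)
    then have "u$j = z0 * u$k" using upos z0 by (simp add: field_simps)
    then have "ln (u$j) = ln (u$k) + L" using upos[rule_format, of k] z0 unfolding L_def by (simp add: ln_mult)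
    then show ?thesis unfolding w_def by simp
  qed simp
  have Aw: "(Am1 + A0 + A1) *v w = w + L *\<^sub>R ((Am1 - A1) *v (\<chi> j. 1))"
  proof (rule vec_eq_iff[THEN iffD2], rule allI)
    fix j
    have "((Am1 + A0 + A1) *v w)$j = (\<Sum>k\<in>UNIV. Am1$j$k * w$k + A0$j$k * w$k + A1$j$k * w$k)"
      by (simp add: matrix_vector_mult_def algebra_simps)
    also have "\<dots> = (\<Sum>k\<in>UNIV. w$j * (Am1$j$k + A0$j$k + A1$j$k) + L * (Am1$j$k - A1$j$k))"
    proof (rule sum.cong[OF refl])
      fix k
      have h: "Am1$j$k * w$k = Am1$j$k * w$j + Am1$j$k * L" "A0$j$k * w$k = A0$j$k * w$j"
        "A1$j$k * w$k = A1$j$k * w$j - A1$j$k * L"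
        using cm[of j k] c0[of j k] cp[of j k] by (simp_all add: algebra_simps)
      show "Am1$j$k * w$k + A0$j$k * w$k + A1$j$k * w$k
         = w$j * (Am1$j$k + A0$j$k + A1$j$k) + L * (Am1$j$k - A1$j$k)"
        unfolding h by (simp add: algebra_simps)
    qed
    also have "\<dots> = w$j * (\<Sum>k\<in>UNIV. Am1$j$k + A0$j$k + A1$j$k) + L * (\<Sum>k\<in>UNIV. Am1$j$k - A1$j$k)"
      by (subst sum.distrib) (simp only: sum_distrib_left)
    also have "\<dots> = (w + L *\<^sub>R ((Am1 - A1) *v (\<chi> j. 1)))$j"
      using stoch by (simp add: matrix_vector_mult_def)
    finally show "((Am1 + A0 + A1) *v w)$j = (w + L *\<^sub>R ((Am1 - A1) *v (\<chi> j. 1)))$j" .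
  qed
  have "mu \<bullet> w = mu \<bullet> ((Am1 + A0 + A1) *v w)"
    using dot_lmul_matrix[of mu "Am1 + A0 + A1" w] mu by simp
  also have "\<dots> = mu \<bullet> w + L * (mu \<bullet> ((Am1 - A1) *v (\<chi> j. 1)))"
    unfolding Aw by (simp add: inner_add_right)
  finally have "L * (mu \<bullet> ((Am1 - A1) *v (\<chi> j. 1))) = 0" by simp
  then show False using Lpos pos_rec by simp
qed

lemma edge_bound:
  fixes Am1 A0 A1 :: "real^'m^'m" and u :: "real^'m"
  assumes nn: "nonneg_mat Am1" "nonneg_mat A0" "nonneg_mat A1"
    and z0: "1 < z0" and upos: "\<forall>j. 0 < u$j"
    and a: "0 \<le> a" "a \<le> 1"
  shows "((Am1 + A0 + A1)$j$k / z0 * min 1 (u$k / u$j)) * u$j powr a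
      \<le> qbd_Az Am1 A0 A1 (z0 powr a) $ j $ k * u$k powr a"
proof -
  define z where "z = z0 powr a"
  have z1: "1 \<le> z" unfolding z_def using z0 a by (simp add: ge_one_powr_ge_zero)
  have zz0: "z \<le> z0" unfolding z_def using z0 a by (metis powr_mono powr_one_eq_one less_le_trans zero_less_one powr_one less_imp_le)
  have ent: "(Am1 + A0 + A1)$j$k / z0 \<le> qbd_Az Am1 A0 A1 z $ j $ k"
  proof -
    have dv: "c / z0 \<le> c" if c: "0 \<le> c" for c
    proof -
      have "c * 1 \<le> c * z0" using c z0 by (intro mult_left_mono) auto
      then show ?thesis using z0 by (simp add: divide_le_eq)
    qed
    have "Am1$j$k / z0 \<le> (1/z) * Am1$j$k"
      using nn z1 zz0 unfolding nonneg_mat_def by (simp add: divide_left_mono frac_le)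
    moreover have "A0$j$k / z0 \<le> A0$j$k"
      using nn unfolding nonneg_mat_def by (simp add: dv)
    moreover have "A1$j$k / z0 \<le> z * A1$j$k"
    proof -
      have "A1$j$k / z0 \<le> A1$j$k" using nn unfolding nonneg_mat_def by (simp add: dv)
      also have "\<dots> \<le> z * A1$j$k"
      proof -
        have "1 * A1$j$k \<le> z * A1$j$k" using nn z1 unfolding nonneg_mat_def by (intro mult_right_mono) auto
        then show ?thesis by simp
      qed
      finally show ?thesis .
    qed
    ultimately show ?thesis by (simp add: qbd_Az_def add_divide_distrib)
  qed
  have uk: "0 < u$k" and uj: "0 < u$j" using upos by auto
  have rat: "min 1 (u$k / u$j) * u$j powr a \<le> u$k powr a"
  proof -
    have "min 1 (u$k / u$j) \<le> (u$k / u$j) powr a" using uk uj a by (intro powr_ge_min) auto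
    also have "\<dots> = u$k powr a / u$j powr a" using uk uj by (simp add: powr_divide)
    finally show ?thesis using uj by (simp add: le_divide_eq)
  qed
  have "((Am1 + A0 + A1)$j$k / z0 * min 1 (u$k / u$j)) * u$j powr a
      = ((Am1 + A0 + A1)$j$k / z0) * (min 1 (u$k / u$j) * u$j powr a)" by simp
  also have "\<dots> \<le> qbd_Az Am1 A0 A1 z $ j $ k * u$k powr a"
  proof (rule mult_mono[OF ent rat])
    show "0 \<le> qbd_Az Am1 A0 A1 z $ j $ k"
      using nn z1 unfolding nonneg_mat_def qbd_Az_def by (auto intro!: add_nonneg_nonneg mult_nonneg_nonneg)
    show "0 \<le> min 1 (u$k / u$j) * u$j powr a" using uk uj by simp
  qed
  finally show ?thesis unfolding z_def .
qed

(* ---- Drift ---- *)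
lemma sum3: "n \<noteq> (0::nat) \<Longrightarrow> sum g {n-1, n, n+1} = g (n-1) + g n + g (n+1)"
proof -
  assume "n \<noteq> 0"
  then have "n - 1 \<notin> {n, n+1}" "n \<notin> {n+1}" by auto
  then show ?thesis by (simp add: add.assoc)
qed

lemma drift_part:
  fixes B Am1 A0 A1 :: "real^'m^'m" and u :: "real^'m" and z0 lam :: real
  assumes z0: "1 < z0" and u_pos: "\<forall>j. 0 < u$j"
    and eig: "qbd_Az Am1 A0 A1 z0 *v u = lam *\<^sub>R u"
    and lam: "0 < lam" "lam < 1"
  shows "drift_cond (qbd_P B Am1 A0 A1)
           (\<lambda>(n, j). z0 ^ n * u$j) lam
           (Max (range (\<lambda>j. (B *v u + A1 *v (z0 *\<^sub>R u) - lam *\<^sub>R u)$j)))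
           {(n, j). n = 0}"
proof -
  define v where "v = (\<lambda>(n::nat, j). z0 ^ n * u$j)"
  define b where "b = Max (range (\<lambda>j. (B *v u + A1 *v (z0 *\<^sub>R u) - lam *\<^sub>R u)$j))"
  define P where "P = qbd_P B Am1 A0 A1"
  have eigj: "(\<Sum>k\<in>UNIV. Am1$i$k * u$k) + z0 * (\<Sum>k\<in>UNIV. A0$i$k * u$k) + z0 * z0 * (\<Sum>k\<in>UNIV. A1$i$k * u$k)
       = z0 * lam * u$i" for i
  proof -
    have "(qbd_Az Am1 A0 A1 z0 *v u)$i = lam * u$i" using eig by simp
    then have h1: "(\<Sum>k\<in>UNIV. ((1/z0) * Am1$i$k + A0$i$k + z0 * A1$i$k) * u$k) = lam * u$i"
      by (simp add: qbd_Az_def matrix_vector_mult_def)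
    moreover have "z0 * (\<Sum>k\<in>UNIV. ((1/z0) * Am1$i$k + A0$i$k + z0 * A1$i$k) * u$k)
        = (\<Sum>k\<in>UNIV. Am1$i$k * u$k) + z0 * (\<Sum>k\<in>UNIV. A0$i$k * u$k) + z0 * z0 * (\<Sum>k\<in>UNIV. A1$i$k * u$k)"
    proof -
      have "z0 * (((1/z0) * Am1$i$k + A0$i$k + z0 * A1$i$k) * u$k)
          = Am1$i$k * u$k + z0 * (A0$i$k * u$k) + z0 * z0 * (A1$i$k * u$k)" for k
        using z0 by (simp add: field_simps)
      then show ?thesis
        by (simp add: sum_distrib_left sum.distrib)
    qed
    ultimately show ?thesis by (metis mult.assoc)
  qed
  have row: "(\<lambda>y. P x y * v y) summable_on UNIV \<and>
        (\<Sum>\<^sub>\<infinity>y. P x y * v y) \<le> lam * v x + b * indicator {(n, j). n = 0} x" for x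
  proof -
    obtain n i where x: "x = (n, i)" by force
    define F where "F = {n - 1, n, n + 1} \<times> (UNIV :: 'm set)"
    have fin: "finite F" unfolding F_def by simp
    have out: "P x y * v y = 0" if "y \<notin> F" for y
      using that unfolding F_def P_def x qbd_P_def by (auto split: prod.splits)
    have summ: "(\<lambda>y. P x y * v y) summable_on UNIV"
      using summable_on_cong_neutral[of F UNIV "\<lambda>y. P x y * v y" "\<lambda>y. P x y * v y"] fin out
      by auto
    have inf: "(\<Sum>\<^sub>\<infinity>y. P x y * v y) = sum (\<lambda>y. P x y * v y) F"
      using infsum_cong_neutral[of F UNIV "\<lambda>y. P x y * v y" "\<lambda>y. P x y * v y"] fin out
      by auto
    show ?thesis
    proof (cases "n = 0")
      case True
      have "sum (\<lambda>y. P x y * v y) F = (\<Sum>l\<in>{0,1::nat}. \<Sum>k\<in>UNIV. P x (l,k) * v (l,k))"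
        unfolding F_def True by (simp add: sum.cartesian_product)
      also have "\<dots> = (B *v u + A1 *v (z0 *\<^sub>R u))$i"
        unfolding P_def x True qbd_P_def v_def
        by (simp add: matrix_vector_mult_def sum.distrib algebra_simps sum_distrib_left)
      also have "\<dots> \<le> lam * u$i + b"
      proof -
        have "(B *v u + A1 *v (z0 *\<^sub>R u) - lam *\<^sub>R u)$i \<le> b"
          unfolding b_def by (rule Max_ge) auto
        then show ?thesis by simp
      qed
      finally show ?thesis using summ inf by (simp add: x True v_def)
    next
      case False
      then obtain m where m: "n = Suc m" using not0_implies_Suc by blast
      have "sum (\<lambda>y. P x y * v y) F = (\<Sum>l\<in>{n - 1, n, n + 1}. \<Sum>k\<in>UNIV. P x (l,k) * v (l,k))"
        unfolding F_def by (simp add: sum.cartesian_product)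
      also have "\<dots> = (\<Sum>k\<in>UNIV. P x (n-1,k) * v (n-1,k)) + (\<Sum>k\<in>UNIV. P x (n,k) * v (n,k))
          + (\<Sum>k\<in>UNIV. P x (n+1,k) * v (n+1,k))"
        by (rule sum3[OF False])
      also have "\<dots> = z0 ^ m * ((\<Sum>k\<in>UNIV. Am1$i$k * u$k) + z0 * (\<Sum>k\<in>UNIV. A0$i$k * u$k)
           + z0 * z0 * (\<Sum>k\<in>UNIV. A1$i$k * u$k))"
      proof -
        have g1: "(\<Sum>k\<in>UNIV. P x (n-1,k) * v (n-1,k)) = z0 ^ m * (\<Sum>k\<in>UNIV. Am1$i$k * u$k)"
          unfolding P_def x qbd_P_def v_def m
          by (simp add: sum_distrib_left algebra_simps)
        have g2: "(\<Sum>k\<in>UNIV. P x (n,k) * v (n,k)) = z0 ^ m * (z0 * (\<Sum>k\<in>UNIV. A0$i$k * u$k))"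
          unfolding P_def x qbd_P_def v_def m
          by (simp add: sum_distrib_left algebra_simps)
        have g3: "(\<Sum>k\<in>UNIV. P x (n+1,k) * v (n+1,k)) = z0 ^ m * (z0 * z0 * (\<Sum>k\<in>UNIV. A1$i$k * u$k))"
          unfolding P_def x qbd_P_def v_def m
          by (simp add: sum_distrib_left algebra_simps)
        show ?thesis unfolding g1 g2 g3 by (simp add: distrib_left)
      qed
      also have "\<dots> = z0 ^ m * (z0 * lam * u$i)" by (simp only: eigj)
      also have "\<dots> = lam * v x" by (simp add: x v_def m)
      finally show ?thesis using summ inf False by (simp add: x)
    qed
  qed
  have vpos: "\<exists>\<epsilon>>0. \<forall>x. \<epsilon> \<le> v x"
  proof -
    define e where "e = Min (range (\<lambda>j. u$j))"
    have "e \<in> range (\<lambda>j. u$j)" unfolding e_def by (rule Min_in) auto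
    then have epos: "0 < e" using u_pos by auto
    have "e \<le> v x" for x
    proof -
      obtain n j where x: "x = (n, j)" by force
      have "e \<le> u$j" unfolding e_def by (rule Min_le) auto
      also have "\<dots> \<le> z0 ^ n * u$j"
      proof -
        have "1 \<le> z0 ^ n" using z0 by (simp add: one_le_power)
        then show ?thesis using u_pos[rule_format, of j] by (simp add: mult_le_cancel_right1)
      qed
      finally show ?thesis by (simp add: x v_def)
    qed
    then show ?thesis using epos by blast
  qed
  have "{(n::nat, j::'m). n = 0} = {0} \<times> UNIV" by auto
  then have finC: "finite {(n::nat, j::'m). n = 0}" by simp
  show ?thesis
    unfolding drift_cond_def using vpos lam row finC
    by (simp add: v_def b_def P_def)
qed

(* ---- Main2 ---- *)
theorem lemma3p1:
  fixes B Am1 A0 A1 :: "real^'m^'m"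
    and mu :: "real^'m"
    and z0 :: real
    and u :: "real^'m"
  assumes nonneg: "nonneg_mat B" "nonneg_mat Am1" "nonneg_mat A0" "nonneg_mat A1"
    and stoch0: "\<forall>i. (\<Sum>j\<in>UNIV. B$i$j + A1$i$j) = 1"
    and stoch: "\<forall>i. (\<Sum>j\<in>UNIV. Am1$i$j + A0$i$j + A1$i$j) = 1"
    and irr_chain: "irreducible_chain (qbd_P B Am1 A0 A1)"
    and irr_A: "irreducible_mat (Am1 + A0 + A1)"
    and mu_stat: "mu v* (Am1 + A0 + A1) = mu" "\<forall>j. 0 \<le> mu$j" "(\<Sum>j\<in>UNIV. mu$j) = 1"
    and pos_rec: "mu \<bullet> ((Am1 - A1) *v (\<chi> j. 1)) > 0"
    and z0_gt: "1 < z0"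
    and z0_crit: "((\<lambda>z. spectral_radius (qbd_Az Am1 A0 A1 z)) has_real_derivative 0) (at z0)"
    and z0_min: "\<forall>z. 1 < z \<and> z < z0 \<longrightarrow>
                   \<not> ((\<lambda>z. spectral_radius (qbd_Az Am1 A0 A1 z)) has_real_derivative 0) (at z)"
    and u_pos: "\<forall>j. 0 < u$j"
    and u_eig: "qbd_Az Am1 A0 A1 z0 *v u = spectral_radius (qbd_Az Am1 A0 A1 z0) *\<^sub>R u"
  shows "drift_cond (qbd_P B Am1 A0 A1)
           (\<lambda>(n, j). z0 ^ n * u$j)
           (spectral_radius (qbd_Az Am1 A0 A1 z0))
           (Max (range (\<lambda>j. (B *v u + A1 *v (z0 *\<^sub>R u)
                                - spectral_radius (qbd_Az Am1 A0 A1 z0) *\<^sub>R u)$j)))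
           {(n, j). n = 0}"
proof -
  define f where "f z = spectral_radius (qbd_Az Am1 A0 A1 z)" for z
  define lam where "lam = f z0"
  have z0pos: "0 < z0" using z0_gt by simp
  have eigrow: "\<forall>j. (\<Sum>k\<in>UNIV. ((1/z0) * Am1$j$k + A0$j$k + z0 * A1$j$k) * u$k) = lam * u$j"
  proof
    fix j
    have "(qbd_Az Am1 A0 A1 z0 *v u)$j = lam * u$j" using u_eig unfolding lam_def f_def by simp
    then show "(\<Sum>k\<in>UNIV. ((1/z0) * Am1$j$k + A0$j$k + z0 * A1$j$k) * u$k) = lam * u$j"
      by (simp add: qbd_Az_def matrix_vector_mult_def)
  qed
  have coef_nn: "0 \<le> (1/z0) * Am1$j$k + A0$j$k + z0 * A1$j$k" for j k
    using nonneg z0pos unfolding nonneg_mat_def by (auto intro!: add_nonneg_nonneg mult_nonneg_nonneg)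
  have lampos: "0 < lam"
  proof -
    fix j :: 'm
    have "\<exists>k. 0 < Am1$j$k + A0$j$k + A1$j$k"
    proof (rule ccontr)
      assume "\<not> ?thesis"
      then have "(\<Sum>k\<in>UNIV. Am1$j$k + A0$j$k + A1$j$k) \<le> 0" by (auto intro: sum_nonpos simp: not_less)
      then show False using stoch by simp
    qed
    then obtain k where k: "0 < Am1$j$k + A0$j$k + A1$j$k" by blast
    have "0 < (1/z0) * Am1$j$k + A0$j$k + z0 * A1$j$k"
    proof -
      have "0 < Am1$j$k \<or> 0 < A0$j$k \<or> 0 < A1$j$k"
        by (rule ccontr) (use k in auto)
      moreover have "0 \<le> (1/z0) * Am1$j$k" "0 \<le> A0$j$k" "0 \<le> z0 * A1$j$k"
        using nonneg z0pos unfolding nonneg_mat_def by auto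
      ultimately show ?thesis using z0pos
        by (elim disjE) (simp_all add: add_pos_nonneg add_nonneg_pos)
    qed
    have "0 < (\<Sum>k\<in>UNIV. ((1/z0) * Am1$j$k + A0$j$k + z0 * A1$j$k) * u$k)"
    proof (rule sum_pos2[where i=k])
      show "0 < ((1/z0) * Am1$j$k + A0$j$k + z0 * A1$j$k) * u$k"
        using \<open>0 < (1/z0) * Am1$j$k + A0$j$k + z0 * A1$j$k\<close> u_pos by simp
      show "0 \<le> ((1/z0) * Am1$j$i + A0$j$i + z0 * A1$j$i) * u$i" for i
        using coef_nn[of j i] u_pos[rule_format, of i] by simp
    qed auto
    then have "0 < lam * u$j" using eigrow by simp
    then show ?thesis using u_pos[rule_format, of j] by (simp add: zero_less_mult_iff)
  qed
  have lam_lt: "lam < 1"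
  proof (rule ccontr)
    assume "\<not> lam < 1"
    then have lam1: "1 \<le> lam" by simp
    define E where "E j = lam - 1 + 2 * Dfun Am1 A0 A1 u z0 j" for j
    define I where "I = {1/2..1::real}"
    define M where "M a = qbd_Az Am1 A0 A1 (z0 powr a)" for a
    define x where "x a = (\<chi> k. u$k powr a)" for a
    define R where "R = {(k, l). 0 < (Am1 + A0 + A1)$k$l}"
    have Dnn: "0 \<le> Dfun Am1 A0 A1 u z0 j" for j
    proof -
      have p: "0 \<le> u$k/(z0*u$j)" "0 \<le> u$k/u$j" "0 \<le> z0*u$k/u$j" for k
        using u_pos[rule_format, of j] u_pos[rule_format, of k] z0pos by (simp_all add: less_imp_le)
      show ?thesis unfolding Dfun_def using nonneg p dd_nonneg unfolding nonneg_mat_def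
        by (auto intro!: sum_nonneg add_nonneg_nonneg mult_nonneg_nonneg)
    qed
    have Enn: "\<forall>j. 0 \<le> E j" unfolding E_def using lam1 Dnn by (simp add: add_nonneg_nonneg)
    have G: "\<exists>g. 0 < E g"
    proof (cases "lam = 1")
      case False
      have "0 < E undefined" unfolding E_def using lam1 False Dnn[of undefined] by simp
      then show ?thesis by blast
    next
      case True
      show ?thesis
      proof (rule ccontr)
        assume "\<not> ?thesis"
        have "Dfun Am1 A0 A1 u z0 j = 0" for j
        proof -
          have "E j \<le> 0" using \<open>\<not> (\<exists>g. 0 < E g)\<close> by (simp add: not_less)
          then show ?thesis using Dnn[of j] True unfolding E_def by simp
        qed
        then have "\<forall>j. Dfun Am1 A0 A1 u z0 j = 0" by blast
        then show False
          using G_nonempty[OF nonneg(2,3,4) stoch mu_stat(1) pos_rec z0_gt u_pos] by blast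
      qed
    qed
    have nnM: "\<forall>a\<in>I. nonneg_mat (M a)"
      using nonneg z0pos unfolding nonneg_mat_def M_def qbd_Az_def
      by (auto intro!: add_nonneg_nonneg mult_nonneg_nonneg)
    have xpos: "\<forall>a\<in>I. \<forall>j. 0 < x a $ j"
    proof (intro ballI allI)
      fix a j
      have "u$j \<noteq> 0" using u_pos[rule_format, of j] by simp
      then show "0 < x a $ j" unfolding x_def by simp
    qed
    have base: "\<forall>a\<in>I. \<forall>j. (M a *v x a)$j \<le> (lam - (1 - a) * E j) * x a $ j"
      unfolding M_def x_def E_def I_def
      using base_ineq[OF nonneg(2,3,4) stoch z0_gt u_pos eigrow] by auto
    have edge: "\<forall>(j,k)\<in>R. \<exists>\<delta>>0. \<forall>a\<in>I. \<delta> * x a $ j \<le> M a $ j $ k * x a $ k"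
    proof (clarify)
      fix j k assume "(j, k) \<in> R"
      then have jk: "0 < (Am1 + A0 + A1)$j$k" unfolding R_def by simp
      define \<delta> where "\<delta> = (Am1 + A0 + A1)$j$k / z0 * min 1 (u$k / u$j)"
      have "0 < \<delta>" unfolding \<delta>_def using jk z0pos u_pos by simp
      moreover have "\<forall>a\<in>I. \<delta> * x a $ j \<le> M a $ j $ k * x a $ k"
        unfolding \<delta>_def M_def x_def I_def
        using edge_bound[OF nonneg(2,3,4) z0_gt u_pos] by simp
      ultimately show "\<exists>\<delta>>0. \<forall>a\<in>I. \<delta> * x a $ j \<le> M a $ j $ k * x a $ k" by blast
    qed
    have irr: "\<forall>j g. (j, g) \<in> R\<^sup>*" using irr_A unfolding irreducible_mat_def R_def by blast
    have Ile: "\<forall>a\<in>I. a \<le> 1" unfolding I_def by simp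
    obtain N \<kappa> where NK: "0 < N" "0 < \<kappa>"
      "\<forall>a\<in>I. \<forall>j. (((*v) (M a) ^^ N) (x a))$j \<le> (lam ^ N - (1 - a) * \<kappa>) * x a $ j"
      using propagation[OF lam1 Ile nnM xpos Enn base edge irr G] by blast
    define c where "c = \<kappa> / (real N * lam ^ (N - 1) * (z0 * ln z0))"
    have cpos: "0 < c" unfolding c_def using NK lampos z0_gt by simp
    have bound: "f z \<le> lam - c * (z0 - z)" if z: "sqrt z0 \<le> z" "z < z0" for z
    proof -
      define a where "a = ln z / ln z0"
      note cv = convert[OF z0_gt z]
      have aI: "a \<in> I" unfolding I_def a_def using cv by auto
      have fz: "f z = spectral_radius (M a)" unfolding f_def M_def a_def using cv by simp
      have "f z ^ N \<le> lam ^ N - (1 - a) * \<kappa>"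
        unfolding fz using sr_bound[of "M a" "x a" N] nnM xpos NK(3) aI by auto
      moreover have "0 \<le> f z" unfolding f_def using sr_in by (metis norm_ge_zero)
      moreover have "0 \<le> (1 - a) * \<kappa>" using cv NK unfolding a_def by simp
      ultimately have "f z \<le> lam - (1 - a) * \<kappa> / (real N * lam ^ (N - 1))"
        using root_step[OF lam1 NK(1)] by blast
      also have "\<dots> \<le> lam - c * (z0 - z)"
      proof -
        have "c * (z0 - z) = ((z0 - z) / (z0 * ln z0)) * \<kappa> / (real N * lam ^ (N - 1))"
          unfolding c_def by (simp add: field_simps)
        also have "\<dots> \<le> (1 - a) * \<kappa> / (real N * lam ^ (N - 1))"
          using cv NK lampos unfolding a_def
          by (intro divide_right_mono mult_right_mono) auto
        finally show ?thesis by simp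
      qed
      finally show ?thesis .
    qed
    have der: "((\<lambda>z. f z - (c/2) * z) has_real_derivative (0 - c/2)) (at z0)"
      using z0_crit unfolding f_def by (auto intro!: derivative_eq_intros)
    obtain d where d: "0 < d" "\<forall>h>0. h < d \<longrightarrow> f z0 - (c/2) * z0 < f (z0 - h) - (c/2) * (z0 - h)"
      using DERIV_neg_dec_left[OF der] cpos by auto
    have sq: "sqrt z0 < z0"
    proof -
      have "1 < sqrt z0" using z0_gt by simp
      then have "sqrt z0 * 1 < sqrt z0 * sqrt z0" by (intro mult_strict_left_mono) auto
      then show ?thesis using z0pos by simp
    qed
    define h where "h = min (d/2) (z0 - sqrt z0)"
    have hpos: "0 < h" unfolding h_def using d sq by simp
    have hd: "h < d" unfolding h_def using d by simp
    have "f (z0 - h) \<le> lam - c * (z0 - (z0 - h))"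
      using bound[of "z0 - h"] hpos unfolding h_def by simp
    then have A: "f (z0 - h) \<le> lam - c * h" by simp
    have B: "lam - (c/2) * z0 < f (z0 - h) - (c/2) * (z0 - h)" using d hpos hd unfolding lam_def by blast
    have C: "(c/2) * (z0 - h) = (c/2) * z0 - (c/2) * h" by (rule right_diff_distrib)
    have "c * h < (c/2) * h" using A B C by linarith
    moreover have "0 < c * h" using cpos hpos by simp
    ultimately show False by simp
  qed
  have eig': "qbd_Az Am1 A0 A1 z0 *v u = lam *\<^sub>R u" using u_eig unfolding lam_def f_def .
  show ?thesis
    using drift_part[OF z0_gt u_pos eig' lampos lam_lt, of B] unfolding lam_def f_def .
qed

end
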